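(* Let $d$ be a prime, $n,N\in\mathbb{N}$, $\omega\in\mathbb{C}$ a primitive $d$-th root of unity, $\zeta(m)=\omega^m$, $A\le\mathbb{C}^\times$ with $\omega\in A$ (and containing a square root of $\omega$ if $d=2$), and $W_1,W_2\in M_n(\mathbb{Z}_d)$ with $W_i-W_i^T$ of full rank. For $i=1,2$ let $\mu_i:\mathcal{G}_d^n(A,\zeta,W_i)\to GL(\mathbb{C}^N)$, $\mu_i(a,p,x)=a\,\omega^p\tau_i(x)$, be injective group homomorphisms, let $\phi:\mathcal{G}_d^n(A,\zeta,W_1)\to\mathcal{G}_d^n(A,\zeta,W_2)$ be a group isomorphism, and suppose $S\in GL(\mathbb{C}^N)$ satisfies $\mu_2(\phi(g))=S\mu_1(g)S^{-1}$ for all $g$. If there is a set $B\subseteq\mathcal{G}_d^n(A,\zeta,W_1)$ such that $\mu_1(B)$ consists of Hermitian matrices spanning $M_N(\mathbb{C})$ and $\mu_2(\phi(g))$ is Hermitian for all $g\in B$, then there is $c\in\mathbb{C}\setminus\{0\}$ such that $cS$ is unitary. The same conclusion holds if "Hermitian" is replaced by "unitary" in both places.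
   Context: Let $F\subseteq A$ be a fixed set of representatives of $A/\zeta(\mathbb{Z}_d)$ with $1\in F$, and $r:A\to F$, $u:A\to\mathbb{Z}_d$ the maps with $a=r(a)\omega^{u(a)}$. For $W\in M_n(\mathbb{Z}_d)$, $\mathcal{G}_d^n(A,\zeta,W)$ is the set $F\times\mathbb{Z}_d\times\mathbb{Z}_d^n$ with multiplication $(a,p,x)\cdot(b,q,y)=(r(ab),\,u(ab)+p+q+x^TWy,\,x+y)$. *)

theory Defs
  imports "HOL-Algebra.Group" "Jordan_Normal_Form.Matrix"
begin

text \<open>Z_d is represented by the integers {0..<d} with arithmetic mod d;
  Z_d^n by functions nat => int with entries in {0..<d} at indices < n and
  0 at indices >= n.\<close>

definition zvecs :: "nat \<Rightarrow> nat \<Rightarrow> (nat \<Rightarrow> int) set" where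
  "zvecs d n = {x. (\<forall>i<n. 0 \<le> x i \<and> x i < int d) \<and> (\<forall>i\<ge>n. x i = 0)}"

definition zmats :: "nat \<Rightarrow> nat \<Rightarrow> (nat \<Rightarrow> nat \<Rightarrow> int) set" where
  "zmats d n = {W. \<forall>i<n. \<forall>j<n. 0 \<le> W i j \<and> W i j < int d}"

definition bil :: "nat \<Rightarrow> nat \<Rightarrow> (nat \<Rightarrow> nat \<Rightarrow> int) \<Rightarrow> (nat \<Rightarrow> int) \<Rightarrow> (nat \<Rightarrow> int) \<Rightarrow> int" where
  "bil d n W x y = (\<Sum>i<n. \<Sum>j<n. x i * W i j * y j) mod int d"

text \<open>W - W^T has full rank n over the field Z_d (d prime): its kernel is trivial.\<close>
definition skew_full_rank :: "nat \<Rightarrow> nat \<Rightarrow> (nat \<Rightarrow> nat \<Rightarrow> int) \<Rightarrow> bool" where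
  "skew_full_rank d n W \<longleftrightarrow>
     (\<forall>x\<in>zvecs d n. (\<forall>i<n. (\<Sum>j<n. (W i j - W j i) * x j) mod int d = 0) \<longrightarrow> x = (\<lambda>_. 0))"

text \<open>F is a set of representatives of A/\<langle>\<omega>\<rangle> containing 1.\<close>
definition is_rep_set :: "nat \<Rightarrow> complex \<Rightarrow> complex set \<Rightarrow> complex set \<Rightarrow> bool" where
  "is_rep_set d \<omega> A F \<longleftrightarrow> F \<subseteq> A \<and> 1 \<in> F \<and>
     (\<forall>a\<in>A. \<exists>!(f, m). f \<in> F \<and> m \<in> {0..<int d} \<and> a = f * \<omega> powi m)"

definition rep_r :: "nat \<Rightarrow> complex \<Rightarrow> complex set \<Rightarrow> complex \<Rightarrow> complex" where
  "rep_r d \<omega> F a = fst (THE (f, m). f \<in> F \<and> m \<in> {0..<int d} \<and> a = f * \<omega> powi m)"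

definition rep_u :: "nat \<Rightarrow> complex \<Rightarrow> complex set \<Rightarrow> complex \<Rightarrow> int" where
  "rep_u d \<omega> F a = snd (THE (f, m). f \<in> F \<and> m \<in> {0..<int d} \<and> a = f * \<omega> powi m)"

type_synonym gelem = "complex \<times> int \<times> (nat \<Rightarrow> int)"

definition Ggrp :: "nat \<Rightarrow> nat \<Rightarrow> complex \<Rightarrow> complex set \<Rightarrow> (nat \<Rightarrow> nat \<Rightarrow> int) \<Rightarrow> gelem monoid" where
  "Ggrp d n \<omega> F W = \<lparr> carrier = F \<times> {0..<int d} \<times> zvecs d n,
     mult = (\<lambda>(a, p, x) (b, q, y).
        (rep_r d \<omega> F (a * b),
         (rep_u d \<omega> F (a * b) + p + q + bil d n W x y) mod int d,
         (\<lambda>i. (x i + y i) mod int d))),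
     one = (1, 0, (\<lambda>_. 0)) \<rparr>"

definition adj :: "complex mat \<Rightarrow> complex mat" where
  "adj M = mat (dim_col M) (dim_row M) (\<lambda>(i, j). cnj (M $$ (j, i)))"

definition hermitian :: "complex mat \<Rightarrow> bool" where
  "hermitian M \<longleftrightarrow> dim_row M = dim_col M \<and> adj M = M"

definition unitary :: "complex mat \<Rightarrow> bool" where
  "unitary M \<longleftrightarrow> M \<in> carrier_mat (dim_row M) (dim_row M) \<and>
     M * adj M = 1\<^sub>m (dim_row M) \<and> adj M * M = 1\<^sub>m (dim_row M)"

definition mat_span :: "nat \<Rightarrow> complex mat set \<Rightarrow> complex mat set" where
  "mat_span N S = {M. \<exists>T c. finite T \<and> T \<subseteq> S \<and>
      M = mat N N (\<lambda>(i, j). \<Sum>X\<in>T. c X * X $$ (i, j))}"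

definition GL_rep :: "nat \<Rightarrow> 'g monoid \<Rightarrow> ('g \<Rightarrow> complex mat) \<Rightarrow> bool" where
  "GL_rep N G \<mu> \<longleftrightarrow>
     (\<forall>g\<in>carrier G. \<mu> g \<in> carrier_mat N N \<and> invertible_mat (\<mu> g)) \<and>
     (\<forall>g\<in>carrier G. \<forall>h\<in>carrier G. \<mu> (g \<otimes>\<^bsub>G\<^esub> h) = \<mu> g * \<mu> h)"

end

theory Submission
  imports Defs
begin

lemma adj_carrier[simp]: "A \<in> carrier_mat n m \<Longrightarrow> adj A \<in> carrier_mat m n"
  by (auto simp: adj_def)

lemma adj_dims[simp]: "dim_row (adj A) = dim_col A" "dim_col (adj A) = dim_row A"
  by (auto simp: adj_def)

lemma adj_index[simp]: "i < dim_col A \<Longrightarrow> j < dim_row A \<Longrightarrow> adj A $$ (i,j) = cnj (A $$ (j,i))"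
  by (auto simp: adj_def)

lemma adj_mult: assumes "A \<in> carrier_mat n k" "B \<in> carrier_mat k m"
  shows "adj (A * B) = adj B * adj A"
  using assms by (intro eq_matI) (auto simp: scalar_prod_def cnj_sum mult.commute)

lemma adj_one[simp]: "adj (1\<^sub>m n) = 1\<^sub>m n"
  by (intro eq_matI) auto

lemma adj_smult: "adj (c \<cdot>\<^sub>m A) = cnj c \<cdot>\<^sub>m adj A"
  by (intro eq_matI) auto

lemma comm_span:
  fixes P :: "complex mat"
  assumes P: "P \<in> carrier_mat N N"
    and Xs: "\<And>X. X \<in> Xs \<Longrightarrow> X \<in> carrier_mat N N \<and> P * X = X * P"
    and Y: "Y \<in> mat_span N Xs"
  shows "P * Y = Y * P"
proof -
  from Y obtain T c where T: "finite T" "T \<subseteq> Xs"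
    and Yd: "Y = mat N N (\<lambda>(i, j). \<Sum>X\<in>T. c X * X $$ (i, j))"
    unfolding mat_span_def by blast
  have YC: "Y \<in> carrier_mat N N" using Yd by auto
  show ?thesis
  proof (rule eq_matI)
    fix i j assume ij: "i < dim_row (Y * P)" "j < dim_col (Y * P)"
    hence i: "i < N" and j: "j < N" using YC P by auto
    have "(P * Y) $$ (i,j) = (\<Sum>k<N. P $$ (i,k) * (\<Sum>X\<in>T. c X * X $$ (k, j)))"
      using i j P YC by (simp add: Yd scalar_prod_def lessThan_atLeast0)
    also have "\<dots> = (\<Sum>X\<in>T. c X * (\<Sum>k<N. P $$ (i,k) * X $$ (k, j)))"
      by (simp add: sum_distrib_left sum_distrib_right mult_ac sum.swap[of _ T])
    also have "\<dots> = (\<Sum>X\<in>T. c X * (P * X) $$ (i,j))"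
    proof (rule sum.cong[OF refl])
      fix X assume "X \<in> T"
      hence "X \<in> carrier_mat N N" using Xs T by auto
      thus "c X * (\<Sum>k<N. P $$ (i,k) * X $$ (k, j)) = c X * (P * X) $$ (i,j)"
        using i j P by (simp add: scalar_prod_def lessThan_atLeast0)
    qed
    also have "\<dots> = (\<Sum>X\<in>T. c X * (X * P) $$ (i,j))"
      using Xs T by (intro sum.cong) auto
    also have "\<dots> = (\<Sum>X\<in>T. c X * (\<Sum>k<N. X $$ (i,k) * P $$ (k, j)))"
    proof (rule sum.cong[OF refl])
      fix X assume "X \<in> T"
      hence "X \<in> carrier_mat N N" using Xs T by auto
      thus "c X * (X * P) $$ (i,j) = c X * (\<Sum>k<N. X $$ (i,k) * P $$ (k, j))"
        using i j P by (simp add: scalar_prod_def lessThan_atLeast0)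
    qed
    also have "\<dots> = (\<Sum>k<N. (\<Sum>X\<in>T. c X * X $$ (i, k)) * P $$ (k,j))"
      by (simp add: sum_distrib_left sum_distrib_right mult_ac sum.swap[of _ T])
    also have "\<dots> = (Y * P) $$ (i,j)"
      using i j P YC by (simp add: Yd scalar_prod_def lessThan_atLeast0)
    finally show "(P * Y) $$ (i,j) = (Y * P) $$ (i,j)" .
  qed (use P YC in auto)
qed

definition emat :: "nat \<Rightarrow> nat \<Rightarrow> nat \<Rightarrow> complex mat" where
  "emat N a b = mat N N (\<lambda>(i,j). if i = a \<and> j = b then 1 else 0)"

lemma comm_all_scalar:
  fixes P :: "complex mat"
  assumes P: "P \<in> carrier_mat N N" and N: "0 < N"
    and C: "\<And>Y. Y \<in> carrier_mat N N \<Longrightarrow> P * Y = Y * P"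
  shows "P = P $$ (0,0) \<cdot>\<^sub>m 1\<^sub>m N"
proof -
  have key: "P $$ (i, a) * (if j = b then 1 else 0) = (if i = a then P $$ (b, j) else 0)"
    if "i < N" "j < N" "a < N" "b < N" for i j a b
  proof -
    have "(P * emat N a b) $$ (i,j) = (emat N a b * P) $$ (i,j)"
      using C[of "emat N a b"] by (simp add: emat_def)
    moreover have "(P * emat N a b) $$ (i,j) = (\<Sum>k\<in>{0..<N}. P $$ (i,k) * (if k = a \<and> j = b then 1 else 0))"
      using that P by (simp add: emat_def scalar_prod_def)
    moreover have "\<dots> = P $$ (i, a) * (if j = b then 1 else 0)"
      using that by (simp add: if_distrib[of "\<lambda>x. _ * x"] sum.delta cong: if_cong) 
    moreover have "(emat N a b * P) $$ (i,j) = (\<Sum>k\<in>{0..<N}. (if i = a \<and> k = b then 1 else 0) * P $$ (k,j))"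
      using that P by (simp add: emat_def scalar_prod_def)
    moreover have "\<dots> = (if i = a then P $$ (b, j) else 0)"
      using that by (auto simp: if_distrib[of "\<lambda>x. x * _"] sum.delta cong: if_cong)
    ultimately show ?thesis by simp
  qed
  show ?thesis
  proof (rule eq_matI)
    fix i j assume "i < dim_row (P $$ (0,0) \<cdot>\<^sub>m 1\<^sub>m N)" "j < dim_col (P $$ (0,0) \<cdot>\<^sub>m 1\<^sub>m N)"
    hence i: "i < N" and j: "j < N" by auto
    show "P $$ (i,j) = (P $$ (0,0) \<cdot>\<^sub>m 1\<^sub>m N) $$ (i,j)"
    proof (cases "i = j")
      case True
      from key[of 0 i 0 i] i j N True show ?thesis by auto
    next
      case False
      from key[of i j j j] i j False show ?thesis by auto
    qed
  qed (use P in auto)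
qed

lemma smult_prod:
  fixes A B :: "complex mat"
  assumes "A \<in> carrier_mat n k" "B \<in> carrier_mat k m"
  shows "(a \<cdot>\<^sub>m A) * (b \<cdot>\<^sub>m B) = (a * b) \<cdot>\<^sub>m (A * B)"
  using assms by (intro eq_matI) (auto simp: scalar_prod_def sum_distrib_left mult_ac)

lemma multN: "A \<in> carrier_mat N N \<Longrightarrow> B \<in> carrier_mat N N \<Longrightarrow> A * B \<in> carrier_mat N N"
  by auto

lemma assocN: "A \<in> carrier_mat N N \<Longrightarrow> B \<in> carrier_mat N N \<Longrightarrow> C \<in> carrier_mat N N \<Longrightarrow>
  A * B * C = A * (B * (C :: 'a :: semiring_0 mat))"
  by (rule assoc_mult_mat) auto

lemma smult_smult2: "a \<cdot>\<^sub>m (b \<cdot>\<^sub>m A) = (a * b :: 'a :: semigroup_mult) \<cdot>\<^sub>m A"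
  by (intro eq_matI) (auto simp: mult.assoc)

lemma smult_one1: "(1 :: 'a :: monoid_mult) \<cdot>\<^sub>m A = A"
  by (intro eq_matI) auto

lemma herm_comm:
  fixes S Sinv M :: "complex mat"
  assumes S: "S \<in> carrier_mat N N" "Sinv \<in> carrier_mat N N" "S * Sinv = 1\<^sub>m N" "Sinv * S = 1\<^sub>m N"
    and M: "M \<in> carrier_mat N N" "adj M = M"
    and H: "adj (S * M * Sinv) = S * M * Sinv"
  shows "(adj S * S) * M = M * (adj S * S)"
proof -
  have aS: "adj S \<in> carrier_mat N N" "adj Sinv \<in> carrier_mat N N" using S by auto
  have E: "S * M * Sinv = adj Sinv * M * adj S"
    using H[symmetric] S M by (simp add: adj_mult[of _ N N _ N])
  have I: "adj S * adj Sinv = 1\<^sub>m N"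
    using S by (metis adj_mult adj_one)
  have "(adj S * S) * M = adj S * (S * (M * (Sinv * S)))"
    using S M aS by (simp add: multN[of _ N] assocN[of _ N])
  also have "\<dots> = adj S * ((S * M * Sinv) * S)"
    using S M aS by (simp add: multN[of _ N] assocN[of _ N])
  also have "\<dots> = adj S * ((adj Sinv * M * adj S) * S)"
    using E by simp
  also have "\<dots> = (adj S * adj Sinv) * (M * (adj S * S))"
    using S M aS by (simp add: multN[of _ N] assocN[of _ N])
  also have "\<dots> = M * (adj S * S)"
    using I S M aS by (simp add: multN[of _ N] assocN[of _ N])
  finally show ?thesis .
qed

lemma unit_comm:
  fixes S Sinv M :: "complex mat"
  assumes S: "S \<in> carrier_mat N N" "Sinv \<in> carrier_mat N N" "S * Sinv = 1\<^sub>m N" "Sinv * S = 1\<^sub>m N"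
    and M: "M \<in> carrier_mat N N" "M * adj M = 1\<^sub>m N"
    and H: "adj (S * M * Sinv) * (S * M * Sinv) = 1\<^sub>m N"
  shows "(adj S * S) * M = M * (adj S * S)"
proof -
  have aS: "adj S \<in> carrier_mat N N" "adj Sinv \<in> carrier_mat N N" "adj M \<in> carrier_mat N N"
    using S M by auto
  have E: "adj Sinv * (adj M * (adj S * (S * (M * Sinv)))) = 1\<^sub>m N"
    using H S M aS by (simp add: adj_mult[of _ N N _ N] multN[of _ N] assocN[of _ N])
  have I: "adj S * adj Sinv = 1\<^sub>m N"
    using S by (metis adj_mult adj_one)
  have "adj M * (adj S * S) * M = (adj S * adj Sinv) * (adj M * (adj S * (S * (M * (Sinv * S)))))"
    using I S M aS by (simp add: multN[of _ N] assocN[of _ N])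
  also have "\<dots> = adj S * (adj Sinv * (adj M * (adj S * (S * (M * Sinv))))) * S"
    using S M aS by (simp add: multN[of _ N] assocN[of _ N])
  also have "\<dots> = adj S * S" using E S aS by (simp add: multN[of _ N] assocN[of _ N])
  finally have F: "adj M * (adj S * S) * M = adj S * S" .
  have "M * (adj S * S) = M * (adj M * (adj S * S) * M)" using F by simp
  also have "\<dots> = (M * adj M) * (adj S * S) * M" using S(1,2) M(1) aS by (simp add: multN[of _ N] assocN[of _ N])
  also have "\<dots> = (adj S * S) * M" using M S aS by simp
  finally show ?thesis by simp
qed

lemma final:
  fixes S Sinv :: "complex mat"
  assumes S: "S \<in> carrier_mat N N" "Sinv \<in> carrier_mat N N" "S * Sinv = 1\<^sub>m N" "Sinv * S = 1\<^sub>m N"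
    and C: "\<And>Y. Y \<in> carrier_mat N N \<Longrightarrow> (adj S * S) * Y = Y * (adj S * S)"
  shows "\<exists>c::complex. c \<noteq> 0 \<and> unitary (c \<cdot>\<^sub>m S)"
proof (cases "N = 0")
  case True
  show ?thesis
    by (rule exI[of _ 1]) (use S True in \<open>auto simp: unitary_def\<close>)
next
  case False
  hence N: "0 < N" by simp
  define P where "P = adj S * S"
  have PC: "P \<in> carrier_mat N N" using S by (auto simp: P_def)
  have Pl: "P = P $$ (0,0) \<cdot>\<^sub>m 1\<^sub>m N"
    by (rule comm_all_scalar[OF PC N]) (use C in \<open>auto simp: P_def\<close>)
  define r where "r = (\<Sum>k<N. (cmod (S $$ (k,0)))^2)"
  have P00: "P $$ (0,0) = of_real r"
    using S N by (simp add: P_def r_def scalar_prod_def complex_norm_square lessThan_atLeast0 mult.commute flip: of_real_power)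
  have r0: "r \<ge> 0" unfolding r_def by (intro sum_nonneg) auto
  have rpos: "r > 0"
  proof (rule ccontr)
    assume "\<not> r > 0"
    hence "r = 0" using r0 by simp
    hence "\<forall>k\<in>{..<N}. (cmod (S $$ (k,0)))^2 = 0"
      unfolding r_def by (subst sum_nonneg_eq_0_iff[symmetric]) auto
    hence z: "\<And>k. k < N \<Longrightarrow> S $$ (k,0) = 0" by auto
    have "(Sinv * S) $$ (0,0) = 0"
      using S(1,2) N z by (auto simp: scalar_prod_def intro!: sum.neutral)
    thus False using S N by simp
  qed
  define lam where "lam = (of_real r :: complex)"
  have L1: "adj S * S = lam \<cdot>\<^sub>m 1\<^sub>m N" using Pl P00 by (simp add: P_def lam_def)
  have "adj S = adj S * (S * Sinv)" using S by simp
  also have "\<dots> = (adj S * S) * Sinv" using S adj_carrier[OF S(1)] by (simp add: assocN[of _ N])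
  also have "\<dots> = lam \<cdot>\<^sub>m Sinv" using L1 S by (simp add: mult_smult_assoc_mat[of _ N N])
  finally have aSe: "adj S = lam \<cdot>\<^sub>m Sinv" .
  have L2: "S * adj S = lam \<cdot>\<^sub>m 1\<^sub>m N"
    using S aSe by (simp add: mult_smult_distrib[of _ N N _ N])
  define c where "c = complex_of_real (1 / sqrt r)"
  have cc: "cnj c * c * lam = 1"
    using rpos by (simp add: c_def lam_def field_simps flip: of_real_mult)
  have cc2: "c * cnj c * lam = 1" using cc by (simp add: mult_ac)
  have c0: "c \<noteq> 0" using rpos by (simp add: c_def)
  have U1: "(c \<cdot>\<^sub>m S) * adj (c \<cdot>\<^sub>m S) = 1\<^sub>m N"
    using S L2 cc2 by (simp add: adj_smult smult_prod[of _ N N _ N] smult_smult2 smult_one1)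
  have U2: "adj (c \<cdot>\<^sub>m S) * (c \<cdot>\<^sub>m S) = 1\<^sub>m N"
    using S L1 cc by (simp add: adj_smult smult_prod[of _ N N _ N] smult_smult2 smult_one1)
  show ?thesis
    using c0 U1 U2 S by (intro exI[of _ c]) (auto simp: unitary_def)
qed

theorem proposition25:
  fixes d n N :: nat and \<omega> :: complex and A F :: "complex set"
    and W1 W2 :: "nat \<Rightarrow> nat \<Rightarrow> int"
    and \<tau>1 \<tau>2 :: "(nat \<Rightarrow> int) \<Rightarrow> complex mat"
    and \<mu>1 \<mu>2 :: "gelem \<Rightarrow> complex mat"
    and \<phi> :: "gelem \<Rightarrow> gelem"
    and S Sinv :: "complex mat"
  assumes d_prime: "prime d"
    and \<omega>_prim: "\<omega> ^ d = 1" "\<forall>k. 0 < k \<and> k < d \<longrightarrow> \<omega> ^ k \<noteq> 1"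
    and A_sub: "A \<subseteq> - {0}" "1 \<in> A" "\<forall>a\<in>A. \<forall>b\<in>A. a * b \<in> A" "\<forall>a\<in>A. inverse a \<in> A"
    and \<omega>_A: "\<omega> \<in> A"
    and sqrt_\<omega>: "d = 2 \<longrightarrow> (\<exists>s\<in>A. s ^ 2 = \<omega>)"
    and F_rep: "is_rep_set d \<omega> A F"
    and W1: "W1 \<in> zmats d n" "skew_full_rank d n W1"
    and W2: "W2 \<in> zmats d n" "skew_full_rank d n W2"
    and \<mu>1_hom: "GL_rep N (Ggrp d n \<omega> F W1) \<mu>1"
    and \<mu>1_inj: "inj_on \<mu>1 (carrier (Ggrp d n \<omega> F W1))"
    and \<mu>1_form: "\<forall>a p x. (a, p, x) \<in> carrier (Ggrp d n \<omega> F W1) \<longrightarrow>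
                    \<mu>1 (a, p, x) = (a * \<omega> ^ nat p) \<cdot>\<^sub>m \<tau>1 x"
    and \<mu>2_hom: "GL_rep N (Ggrp d n \<omega> F W2) \<mu>2"
    and \<mu>2_inj: "inj_on \<mu>2 (carrier (Ggrp d n \<omega> F W2))"
    and \<mu>2_form: "\<forall>a p x. (a, p, x) \<in> carrier (Ggrp d n \<omega> F W2) \<longrightarrow>
                    \<mu>2 (a, p, x) = (a * \<omega> ^ nat p) \<cdot>\<^sub>m \<tau>2 x"
    and \<phi>_iso: "\<phi> \<in> iso (Ggrp d n \<omega> F W1) (Ggrp d n \<omega> F W2)"
    and S: "S \<in> carrier_mat N N" "Sinv \<in> carrier_mat N N"
           "S * Sinv = 1\<^sub>m N" "Sinv * S = 1\<^sub>m N"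
    and conj: "\<forall>g\<in>carrier (Ggrp d n \<omega> F W1). \<mu>2 (\<phi> g) = S * \<mu>1 g * Sinv"
  shows "((\<exists>B\<subseteq>carrier (Ggrp d n \<omega> F W1).
              (\<forall>g\<in>B. hermitian (\<mu>1 g)) \<and> mat_span N (\<mu>1 ` B) = carrier_mat N N \<and>
              (\<forall>g\<in>B. hermitian (\<mu>2 (\<phi> g))))
            \<longrightarrow> (\<exists>c::complex. c \<noteq> 0 \<and> unitary (c \<cdot>\<^sub>m S)))
       \<and> ((\<exists>B\<subseteq>carrier (Ggrp d n \<omega> F W1).
              (\<forall>g\<in>B. unitary (\<mu>1 g)) \<and> mat_span N (\<mu>1 ` B) = carrier_mat N N \<and>
              (\<forall>g\<in>B. unitary (\<mu>2 (\<phi> g))))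
            \<longrightarrow> (\<exists>c::complex. c \<noteq> 0 \<and> unitary (c \<cdot>\<^sub>m S)))"
proof -
  let ?G = "Ggrp d n \<omega> F W1"
  have car: "\<mu>1 g \<in> carrier_mat N N" if "g \<in> carrier ?G" for g
    using \<mu>1_hom that unfolding GL_rep_def by blast
  have gen: "\<exists>c::complex. c \<noteq> 0 \<and> unitary (c \<cdot>\<^sub>m S)"
    if B: "B \<subseteq> carrier ?G" "mat_span N (\<mu>1 ` B) = carrier_mat N N"
      and cm: "\<And>g. g \<in> B \<Longrightarrow> (adj S * S) * \<mu>1 g = \<mu>1 g * (adj S * S)" for B
  proof (rule final[OF S])
    fix Y :: "complex mat" assume "Y \<in> carrier_mat N N"
    hence Y: "Y \<in> mat_span N (\<mu>1 ` B)" using B by simp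
    show "(adj S * S) * Y = Y * (adj S * S)"
      by (rule comm_span[OF _ _ Y]) (use S B car cm in auto)
  qed
  show ?thesis
  proof (intro conjI impI)
    assume "\<exists>B\<subseteq>carrier ?G. (\<forall>g\<in>B. hermitian (\<mu>1 g)) \<and> mat_span N (\<mu>1 ` B) = carrier_mat N N \<and>
              (\<forall>g\<in>B. hermitian (\<mu>2 (\<phi> g)))"
    then obtain B where B: "B \<subseteq> carrier ?G" "\<forall>g\<in>B. hermitian (\<mu>1 g)"
      "mat_span N (\<mu>1 ` B) = carrier_mat N N" "\<forall>g\<in>B. hermitian (\<mu>2 (\<phi> g))" by blast
    show "\<exists>c::complex. c \<noteq> 0 \<and> unitary (c \<cdot>\<^sub>m S)"
    proof (rule gen[OF B(1,3)])
      fix g assume g: "g \<in> B"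
      have gc: "g \<in> carrier ?G" using g B by auto
      have h1: "adj (\<mu>1 g) = \<mu>1 g" using B(2) g by (simp add: hermitian_def)
      have h2: "adj (S * \<mu>1 g * Sinv) = S * \<mu>1 g * Sinv"
        using B(4) g conj gc unfolding hermitian_def by metis
      show "(adj S * S) * \<mu>1 g = \<mu>1 g * (adj S * S)"
        by (rule herm_comm[OF S car[OF gc] h1 h2])
    qed
  next
    assume "\<exists>B\<subseteq>carrier ?G. (\<forall>g\<in>B. unitary (\<mu>1 g)) \<and> mat_span N (\<mu>1 ` B) = carrier_mat N N \<and>
              (\<forall>g\<in>B. unitary (\<mu>2 (\<phi> g)))"
    then obtain B where B: "B \<subseteq> carrier ?G" "\<forall>g\<in>B. unitary (\<mu>1 g)"
      "mat_span N (\<mu>1 ` B) = carrier_mat N N" "\<forall>g\<in>B. unitary (\<mu>2 (\<phi> g))" by blast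
    show "\<exists>c::complex. c \<noteq> 0 \<and> unitary (c \<cdot>\<^sub>m S)"
    proof (rule gen[OF B(1,3)])
      fix g assume g: "g \<in> B"
      have gc: "g \<in> carrier ?G" using g B by auto
      have u1: "\<mu>1 g * adj (\<mu>1 g) = 1\<^sub>m N"
        using B(2) g car[OF gc] by (auto simp: unitary_def)
      have u2: "adj (S * \<mu>1 g * Sinv) * (S * \<mu>1 g * Sinv) = 1\<^sub>m N"
        using B(4) g conj gc S car[OF gc] by (auto simp: unitary_def)
      show "(adj S * S) * \<mu>1 g = \<mu>1 g * (adj S * S)"
        by (rule unit_comm[OF S car[OF gc] u1 u2])
    qed
  qed
qed

end
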